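(* Let $\rho_X,\rho_Z\in(0,1/2)$ and let $C\sim\mathrm{CSS}_n(\rho_X,\rho_Z)$ be a random CSS code. For any constant $f\in(0,1)$, $$\Pr_C\big(B_C(f)\cap L_Z(C)\neq\emptyset\big)\le 2^{-n(\rho_X-6f)}$$ for all sufficiently large $n$.
   Context: $\mathrm{CSS}_n(\rho_X,\rho_Z)$ (with $\rho_Xn,\rho_Zn$ integers): choose $H_Z\in\mathbb{F}_2^{\rho_Zn\times n}$ uniformly at random, then $H_X\in\mathbb{F}_2^{\rho_Xn\times n}$ uniformly at random among matrices with $H_XH_Z^{\mathrm T}=0$; $C=(H_X,H_Z)$. $L_Z(C)=\ker H_X\setminus\mathrm{row}(H_Z)$ is the set of nontrivial logical $Z$ operators (as vectors in $\mathbb{F}_2^n$). Let $S_Z$ be the set of rows of $H_Z$. For $i\in[n]$, $Y_C^i=\{y\in\mathbb{F}_2^n:\exists s\in S_Z,\ y_j=s_j\ \forall j\le i,\ y_j=0\ \forall j>i\}$, and $Y_C=\bigcup_i Y_C^i$. The $Y$-weight $|w|_Y$ of $w\in\mathbb{F}_2^n$ is the minimum size of $S\subseteq Y_C$ with $w=\sum_{s\in S}s$. $B_C(f)=\{w\in\mathbb{F}_2^n:|w|_Y\le fn/\log n\}$. *)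

theory Defs
  imports "HOL-Probability.Probability"
begin

text \<open>Vectors in F_2^n are functions nat => bool supported on {0..<n}
  (coordinate j corresponds to the paper's coordinate j+1); addition is exclusive or.
  An m x n matrix is a function nat => nat => bool supported on {0..<m} x {0..<n};
  its i-th row is M i.\<close>

definition vecs :: "nat \<Rightarrow> (nat \<Rightarrow> bool) set" where
  "vecs n = {v. \<forall>j. n \<le> j \<longrightarrow> \<not> v j}"

definition mats :: "nat \<Rightarrow> nat \<Rightarrow> (nat \<Rightarrow> nat \<Rightarrow> bool) set" where
  "mats m n = {M. \<forall>i j. (m \<le> i \<or> n \<le> j) \<longrightarrow> \<not> M i j}"

definition dot2 :: "nat \<Rightarrow> (nat \<Rightarrow> bool) \<Rightarrow> (nat \<Rightarrow> bool) \<Rightarrow> bool" where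
  "dot2 n u v = odd (card {j. j < n \<and> u j \<and> v j})"

definition vsum2 :: "(nat \<Rightarrow> bool) set \<Rightarrow> (nat \<Rightarrow> bool)" where
  "vsum2 S = (\<lambda>j. odd (card {s \<in> S. s j}))"

definition orth2 :: "nat \<Rightarrow> nat \<Rightarrow> nat \<Rightarrow> (nat \<Rightarrow> nat \<Rightarrow> bool) \<Rightarrow> (nat \<Rightarrow> nat \<Rightarrow> bool) \<Rightarrow> bool" where
  "orth2 n mX mZ HX HZ = (\<forall>i<mX. \<forall>k<mZ. \<not> dot2 n (HX i) (HZ k))"

text \<open>Random CSS code CSS_n with mX = rho_X n and mZ = rho_Z n rows:
  H_Z uniform, then H_X uniform among matrices with H_X H_Z^T = 0.\<close>
definition CSS :: "nat \<Rightarrow> nat \<Rightarrow> nat \<Rightarrow> ((nat \<Rightarrow> nat \<Rightarrow> bool) \<times> (nat \<Rightarrow> nat \<Rightarrow> bool)) pmf" where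
  "CSS n mX mZ =
     bind_pmf (pmf_of_set (mats mZ n)) (\<lambda>HZ.
     bind_pmf (pmf_of_set {HX \<in> mats mX n. orth2 n mX mZ HX HZ}) (\<lambda>HX.
     return_pmf (HX, HZ)))"

definition ker2 :: "nat \<Rightarrow> nat \<Rightarrow> (nat \<Rightarrow> nat \<Rightarrow> bool) \<Rightarrow> (nat \<Rightarrow> bool) set" where
  "ker2 n m H = {v \<in> vecs n. \<forall>i<m. \<not> dot2 n (H i) v}"

definition rowspace2 :: "nat \<Rightarrow> (nat \<Rightarrow> nat \<Rightarrow> bool) \<Rightarrow> (nat \<Rightarrow> bool) set" where
  "rowspace2 m H = {vsum2 S | S. S \<subseteq> H ` {..<m}}"

definition LZ :: "nat \<Rightarrow> nat \<Rightarrow> nat \<Rightarrow> (nat \<Rightarrow> nat \<Rightarrow> bool) \<Rightarrow> (nat \<Rightarrow> nat \<Rightarrow> bool) \<Rightarrow> (nat \<Rightarrow> bool) set" where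
  "LZ n mX mZ HX HZ = ker2 n mX HX - rowspace2 mZ HZ"

text \<open>Y_C: truncations of rows of H_Z to the first i coordinates (paper's i in [n]).\<close>
definition YC :: "nat \<Rightarrow> nat \<Rightarrow> (nat \<Rightarrow> nat \<Rightarrow> bool) \<Rightarrow> (nat \<Rightarrow> bool) set" where
  "YC n mZ HZ = {(\<lambda>j. j \<le> i \<and> s j) | i s. i < n \<and> s \<in> HZ ` {..<mZ}}"

text \<open>Y-weight: minimum size of a subset of Y_C summing to w (infinity if none).\<close>
definition yweight :: "nat \<Rightarrow> nat \<Rightarrow> (nat \<Rightarrow> nat \<Rightarrow> bool) \<Rightarrow> (nat \<Rightarrow> bool) \<Rightarrow> enat" where
  "yweight n mZ HZ w = Inf {enat (card S) | S. S \<subseteq> YC n mZ HZ \<and> w = vsum2 S}"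

definition BC :: "nat \<Rightarrow> nat \<Rightarrow> (nat \<Rightarrow> nat \<Rightarrow> bool) \<Rightarrow> real \<Rightarrow> (nat \<Rightarrow> bool) set" where
  "BC n mZ HZ f = {w \<in> vecs n. \<exists>k::nat. yweight n mZ HZ w = enat k \<and>
                                   real k \<le> f * real n / log 2 (real n)}"

end

theory Submission imports Defs begin

definition vadd :: "(nat \<Rightarrow> bool) \<Rightarrow> (nat \<Rightarrow> bool) \<Rightarrow> (nat \<Rightarrow> bool)" where
  "vadd u v = (\<lambda>j. u j \<noteq> v j)"

lemma card_symdiff_odd:
  assumes "finite A" "finite B"
  shows "odd (card ((A - B) \<union> (B - A))) = (odd (card A) \<noteq> odd (card B))"
proof -
  have 1: "card A = card (A - B) + card (A \<inter> B)"
    using assms by (metis Int_commute card_Diff_subset_Int card_Int_Diff add.commute finite_Int)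
  have 2: "card B = card (B - A) + card (A \<inter> B)"
    using assms by (metis card_Int_Diff add.commute finite_Int Int_commute)
  have 3: "card ((A - B) \<union> (B - A)) = card (A - B) + card (B - A)"
    using assms by (intro card_Un_disjoint) auto
  show ?thesis using 1 2 3 by presburger
qed

lemma dot2_comm: "dot2 n u v = dot2 n v u"
  unfolding dot2_def by (simp add: conj_ac)

lemma dot2_add2: "dot2 n u (vadd v w) = (dot2 n u v \<noteq> dot2 n u w)"
proof -
  let ?A = "{j. j < n \<and> u j \<and> v j}" and ?B = "{j. j < n \<and> u j \<and> w j}"
  have eq: "{j. j < n \<and> u j \<and> vadd v w j} = (?A - ?B) \<union> (?B - ?A)"
    unfolding vadd_def by auto
  have "finite ?A" "finite ?B" by auto
  then show ?thesis unfolding dot2_def eq using card_symdiff_odd[of ?A ?B] by simp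
qed

lemma dot2_add1: "dot2 n (vadd v w) u = (dot2 n v u \<noteq> dot2 n w u)"
proof -
  have "dot2 n (vadd v w) u = dot2 n u (vadd v w)" by (rule dot2_comm)
  also have "\<dots> = (dot2 n u v \<noteq> dot2 n u w)" by (rule dot2_add2)
  also have "\<dots> = (dot2 n v u \<noteq> dot2 n w u)" using dot2_comm[of n u v] dot2_comm[of n u w] by simp
  finally show ?thesis .
qed

lemma vsum2_insert:
  assumes "finite S" "r \<notin> S"
  shows "vsum2 (insert r S) = vadd r (vsum2 S)"
proof
  fix j
  have "{s \<in> insert r S. s j} = (if r j then insert r {s \<in> S. s j} else {s \<in> S. s j})"
    by auto
  then show "vsum2 (insert r S) j = vadd r (vsum2 S) j"
    unfolding vsum2_def vadd_def using assms by auto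
qed

lemma vadd_vecs: "u \<in> vecs n \<Longrightarrow> v \<in> vecs n \<Longrightarrow> vadd u v \<in> vecs n"
  unfolding vecs_def vadd_def by auto

lemma dual_exists:
  assumes "finite R" "R \<subseteq> vecs n" "w \<in> vecs n" "w \<notin> {vsum2 S | S. S \<subseteq> R}"
  shows "\<exists>v\<in>vecs n. (\<forall>r\<in>R. \<not> dot2 n v r) \<and> dot2 n v w"
  using assms
proof (induction R arbitrary: w rule: finite_induct)
  case empty
  have "w \<noteq> vsum2 {}" using empty.prems(3) by blast
  then obtain j where j: "w j" by (auto simp: vsum2_def fun_eq_iff)
  have "\<forall>j. n \<le> j \<longrightarrow> \<not> w j" using empty.prems(2) by (simp add: vecs_def)
  then have jn: "j < n" using j by (meson not_le)
  let ?v = "\<lambda>i. i = j"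
  have "{i. i < n \<and> ?v i \<and> w i} = {j}" using j jn by auto
  then have "dot2 n ?v w" unfolding dot2_def by simp
  moreover have "?v \<in> vecs n" using jn unfolding vecs_def by auto
  ultimately show ?case by (intro bexI[of _ ?v] conjI) auto
next
  case (insert r R)
  have w1: "w \<notin> {vsum2 S | S. S \<subseteq> R}" using insert.prems by blast
  have w2: "vadd w r \<notin> {vsum2 S | S. S \<subseteq> R}"
  proof
    assume "vadd w r \<in> {vsum2 S | S. S \<subseteq> R}"
    then obtain S where S: "S \<subseteq> R" "vadd w r = vsum2 S" by auto
    have "finite S" using finite_subset[OF S(1) insert.hyps(1)] .
    moreover have "r \<notin> S" using S insert.hyps(2) by auto
    ultimately have "vsum2 (insert r S) = vadd r (vadd w r)" using vsum2_insert S(2) by simp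
    also have "\<dots> = w" unfolding vadd_def by auto
    finally have "w \<in> {vsum2 S | S. S \<subseteq> insert r R}" using S by blast
    then show False using insert.prems by blast
  qed
  have Rv: "R \<subseteq> vecs n" "r \<in> vecs n" using insert.prems by auto
  obtain v1 where v1: "v1 \<in> vecs n" "\<forall>x\<in>R. \<not> dot2 n v1 x" "dot2 n v1 w"
    using insert.IH[OF Rv(1) insert.prems(2) w1] by blast
  obtain v2 where v2: "v2 \<in> vecs n" "\<forall>x\<in>R. \<not> dot2 n v2 x" "dot2 n v2 (vadd w r)"
    using insert.IH[OF Rv(1) vadd_vecs[OF insert.prems(2) Rv(2)] w2] by blast
  show ?case
  proof (cases "dot2 n v1 r")
    case False then show ?thesis using v1 by auto
  next
    case T1: True
    show ?thesis
    proof (cases "dot2 n v2 r")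
      case False
      have "dot2 n v2 (vadd w r) = (dot2 n v2 w \<noteq> dot2 n v2 r)" by (rule dot2_add2)
      then have "dot2 n v2 w" using v2(3) False by simp
      then show ?thesis using v2(1,2) False by blast
    next
      case True
      have "vadd v1 v2 \<in> vecs n" using v1 v2 vadd_vecs by auto
      moreover have "\<forall>x\<in>insert r R. \<not> dot2 n (vadd v1 v2) x"
      proof
        fix x assume x: "x \<in> insert r R"
        have "dot2 n (vadd v1 v2) x = (dot2 n v1 x \<noteq> dot2 n v2 x)" by (rule dot2_add1)
        then show "\<not> dot2 n (vadd v1 v2) x" using x v1(2) v2(2) T1 True by auto
      qed
      moreover have "dot2 n (vadd v1 v2) w"
      proof -
        have a: "dot2 n (vadd v1 v2) w = (dot2 n v1 w \<noteq> dot2 n v2 w)" by (rule dot2_add1)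
        have "dot2 n v2 (vadd w r) = (dot2 n v2 w \<noteq> dot2 n v2 r)" by (rule dot2_add2)
        then have "\<not> dot2 n v2 w" using v2(3) True by simp
        then show ?thesis using a v1(3) by simp
      qed
      ultimately show ?thesis by blast
    qed
  qed
qed

lemma finite_vecs: "finite (vecs n)"
proof -
  have "vecs n \<subseteq> (\<lambda>S j. j \<in> S) ` Pow {..<n}"
  proof
    fix v assume "v \<in> vecs n"
    then have "v = (\<lambda>j. j \<in> {j. j < n \<and> v j})" unfolding vecs_def by (auto simp: fun_eq_iff) (meson not_less)
    then show "v \<in> (\<lambda>S j. j \<in> S) ` Pow {..<n}" by blast
  qed
  then show ?thesis by (rule finite_subset) auto
qed

lemma half_card:
  assumes "v \<in> V" "dot2 n v w"
    and V: "V = {h \<in> vecs n. \<forall>r\<in>R. \<not> dot2 n h r}"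
  shows "card V = 2 * card {h \<in> V. \<not> dot2 n h w}"
proof -
  let ?V0 = "{h \<in> V. \<not> dot2 n h w}" and ?V1 = "{h \<in> V. dot2 n h w}"
  have fin: "finite V" using V finite_vecs by auto
  have inv: "vadd v (vadd v h) = h" for h unfolding vadd_def by auto
  have "bij_betw (vadd v) ?V0 ?V1"
  proof (rule bij_betw_byWitness[where f'="vadd v"])
    show "\<forall>a\<in>?V0. vadd v (vadd v a) = a" "\<forall>a\<in>?V1. vadd v (vadd v a) = a" using inv by auto
    show "vadd v ` ?V0 \<subseteq> ?V1" "vadd v ` ?V1 \<subseteq> ?V0"
      using assms vadd_vecs dot2_add1 by auto
  qed
  then have "card ?V0 = card ?V1" by (rule bij_betw_same_card)
  moreover have "card V = card ?V0 + card ?V1"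
    using fin by (subst card_Un_disjoint[symmetric]) (auto intro: arg_cong[where f=card])
  ultimately show ?thesis by simp
qed


lemma card_funs:
  assumes "finite A"
  shows "card {F. (\<forall>i<m. F i \<in> A) \<and> (\<forall>i. m \<le> i \<longrightarrow> F i = d)} = card A ^ m"
proof -
  let ?M = "{F. (\<forall>i<m. F i \<in> A) \<and> (\<forall>i. m \<le> i \<longrightarrow> F i = d)}"
  have "bij_betw (\<lambda>F. restrict F {..<m}) ?M (PiE {..<m} (\<lambda>_. A))"
    by (rule bij_betw_byWitness[where f'="\<lambda>P i. if i < m then P i else d"])
       (auto simp: restrict_def PiE_def extensional_def fun_eq_iff)
  then have "card ?M = card (PiE {..<m} (\<lambda>_. A))" by (rule bij_betw_same_card)
  also have "\<dots> = card A ^ m" by (simp add: card_PiE)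
  finally show ?thesis .
qed

lemma mats_eq: "mats m n = {F. (\<forall>i<m. F i \<in> vecs n) \<and> (\<forall>i. m \<le> i \<longrightarrow> F i = (\<lambda>_. False))}"
  unfolding mats_def vecs_def by (auto simp: fun_eq_iff) (meson not_le)

lemma dot2_zero: "\<not> dot2 n (\<lambda>_. False) w"
  unfolding dot2_def by simp

lemma fixed_bound:
  assumes HZ: "HZ \<in> mats mZ n"
  shows "measure (pmf_of_set {HX \<in> mats mX n. orth2 n mX mZ HX HZ})
           {HX. BC n mZ HZ f \<inter> LZ n mX mZ HX HZ \<noteq> {}} \<le> real (card (BC n mZ HZ f)) / 2 ^ mX"
proof -
  define R where "R = HZ ` {..<mZ}"
  define V where "V = {h \<in> vecs n. \<forall>r\<in>R. \<not> dot2 n h r}"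
  define Ox where "Ox = {HX \<in> mats mX n. orth2 n mX mZ HX HZ}"
  define E where "E = {HX. BC n mZ HZ f \<inter> LZ n mX mZ HX HZ \<noteq> {}}"
  define W where "W = BC n mZ HZ f - rowspace2 mZ HZ"
  define Ow where "Ow = (\<lambda>w. {HX \<in> Ox. \<forall>i<mX. \<not> dot2 n (HX i) w})"
  have finV: "finite V" unfolding V_def using finite_vecs by auto
  have Ox_eq: "Ox = {F. (\<forall>i<mX. F i \<in> V) \<and> (\<forall>i. mX \<le> i \<longrightarrow> F i = (\<lambda>_. False))}"
    unfolding Ox_def V_def R_def mats_eq orth2_def by auto
  have cardO: "card Ox = card V ^ mX" unfolding Ox_eq using card_funs[OF finV] .
  have "(\<lambda>_. False) \<in> V" unfolding V_def vecs_def using dot2_zero by auto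
  then have "card V > 0" using finV card_gt_0_iff by blast
  then have cO: "card Ox > 0" using cardO by simp
  then have finO: "finite Ox" and neO: "Ox \<noteq> {}" using card_gt_0_iff by blast+
  have finR: "finite R" unfolding R_def by auto
  have Rv: "R \<subseteq> vecs n" using HZ unfolding R_def mats_eq by auto
  have finW: "finite W" unfolding W_def BC_def using finite_vecs by (auto intro: finite_subset)
  have Ow_card: "real (card (Ow w)) * 2 ^ mX = real (card Ox)" if w: "w \<in> W" for w
  proof -
    have wv: "w \<in> vecs n" using w unfolding W_def BC_def by auto
    have "w \<notin> {vsum2 S | S. S \<subseteq> R}" using w unfolding W_def rowspace2_def R_def by auto
    then obtain v where v: "v \<in> vecs n" "\<forall>r\<in>R. \<not> dot2 n v r" "dot2 n v w"
      using dual_exists[OF finR Rv wv] by blast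
    have vV: "v \<in> V" unfolding V_def using v by auto
    have hc: "card V = 2 * card {h \<in> V. \<not> dot2 n h w}"
      using half_card[OF vV v(3) V_def] .
    have "Ow w = {F. (\<forall>i<mX. F i \<in> {h \<in> V. \<not> dot2 n h w}) \<and> (\<forall>i. mX \<le> i \<longrightarrow> F i = (\<lambda>_. False))}"
      unfolding Ow_def Ox_eq by auto
    then have "card (Ow w) = card {h \<in> V. \<not> dot2 n h w} ^ mX"
      using card_funs[of "{h \<in> V. \<not> dot2 n h w}" mX "\<lambda>_. False"] finV by simp
    then show ?thesis using cardO hc by (simp add: power_mult_distrib)
  qed
  have sub: "Ox \<inter> E \<subseteq> (\<Union>w\<in>W. Ow w)"
  proof
    fix HX assume "HX \<in> Ox \<inter> E"
    then obtain w where "w \<in> BC n mZ HZ f" "w \<in> LZ n mX mZ HX HZ" "HX \<in> Ox" unfolding E_def by auto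
    then show "HX \<in> (\<Union>w\<in>W. Ow w)" unfolding W_def Ow_def LZ_def ker2_def by auto
  qed
  have "card (Ox \<inter> E) \<le> card (\<Union>w\<in>W. Ow w)"
    by (rule card_mono) (use finW finO sub in \<open>auto simp: Ow_def\<close>)
  also have "\<dots> \<le> (\<Sum>w\<in>W. card (Ow w))" by (rule card_UN_le[OF finW])
  finally have "real (card (Ox \<inter> E)) \<le> (\<Sum>w\<in>W. real (card (Ow w)))" by (metis of_nat_le_iff of_nat_sum)
  also have "\<dots> = (\<Sum>w\<in>W. real (card Ox) / 2 ^ mX)"
    by (rule sum.cong) (use Ow_card in \<open>auto simp: field_simps\<close>)
  also have "\<dots> = real (card W) * real (card Ox) / 2 ^ mX" by simp
  also have "\<dots> \<le> real (card (BC n mZ HZ f)) * real (card Ox) / 2 ^ mX"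
  proof -
    have "card W \<le> card (BC n mZ HZ f)" unfolding W_def BC_def
      by (rule card_mono) (use finite_vecs in \<open>auto intro: finite_subset\<close>)
    then show ?thesis by (simp add: divide_right_mono mult_right_mono)
  qed
  finally have "real (card (Ox \<inter> E)) / real (card Ox) \<le> real (card (BC n mZ HZ f)) / 2 ^ mX"
    using cO by (simp add: field_simps)
  moreover have "measure (pmf_of_set Ox) E = real (card (Ox \<inter> E)) / real (card Ox)"
    using measure_pmf_of_set[OF neO finO] by simp
  ultimately show ?thesis unfolding Ox_def E_def by simp
qed


lemma card_small_subsets:
  assumes "finite Y"
  shows "card {S. S \<subseteq> Y \<and> card S \<le> K} \<le> (card Y + 1) ^ K"
proof -
  let ?L = "{xs. set xs \<subseteq> insert None (Some ` Y) \<and> length xs = K}"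
  have "{S. S \<subseteq> Y \<and> card S \<le> K} \<subseteq> (\<lambda>xs. {y. Some y \<in> set xs}) ` ?L"
  proof
    fix S assume S: "S \<in> {S. S \<subseteq> Y \<and> card S \<le> K}"
    then have "finite S" using assms finite_subset by blast
    then obtain ys where ys: "set ys = S" "distinct ys" using finite_distinct_list by blast
    then have ly: "length ys = card S" using distinct_card by fastforce
    let ?xs = "map Some ys @ replicate (K - card S) None"
    have "?xs \<in> ?L" using S ys ly by auto
    moreover have "S = {y. Some y \<in> set ?xs}" using ys by auto
    ultimately show "S \<in> (\<lambda>xs. {y. Some y \<in> set xs}) ` ?L" by blast
  qed
  then have "card {S. S \<subseteq> Y \<and> card S \<le> K} \<le> card ((\<lambda>xs. {y. Some y \<in> set xs}) ` ?L)"
    by (rule card_mono[rotated]) (simp add: assms finite_lists_length_eq)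
  also have "\<dots> \<le> card ?L" by (rule card_image_le) (simp add: assms finite_lists_length_eq)
  also have "\<dots> = card (insert None (Some ` Y)) ^ K" by (simp add: assms card_lists_length_eq)
  also have "card (insert None (Some ` Y)) = card Y + 1"
    using assms by (simp add: card_image)
  finally show ?thesis .
qed

lemma yweight_witness:
  assumes "yweight n mZ HZ w = enat k"
  shows "\<exists>S. S \<subseteq> YC n mZ HZ \<and> w = vsum2 S \<and> card S = k"
proof -
  let ?T = "{enat (card S) | S. S \<subseteq> YC n mZ HZ \<and> w = vsum2 S}"
  have "?T \<noteq> {}" using assms unfolding yweight_def by (metis Inf_empty enat.distinct(1) top_enat_def)
  then obtain x where "x \<in> ?T" by blast
  then have "Inf ?T \<in> ?T" unfolding Inf_enat_def by (metis (mono_tags, lifting) LeastI empty_iff)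
  then show ?thesis using assms unfolding yweight_def by auto
qed

lemma card_BC:
  assumes n: "2 \<le> n" and mZ: "mZ < n" and f: "0 < f"
  shows "real (card (BC n mZ HZ f)) \<le> 2 powr (2 * f * real n)"
proof -
  define K where "K = nat \<lfloor>f * real n / log 2 (real n)\<rfloor>"
  define Y where "Y = YC n mZ HZ"
  have Yim: "Y = (\<lambda>(i, s). (\<lambda>j. j \<le> i \<and> s j)) ` ({..<n} \<times> HZ ` {..<mZ})"
    unfolding Y_def YC_def by auto
  have finY: "finite Y" unfolding Yim by auto
  have "card Y \<le> card ({..<n} \<times> HZ ` {..<mZ})" unfolding Yim by (rule card_image_le) auto
  also have "\<dots> \<le> n * mZ" by (simp add: card_cartesian_product card_image_le[of "{..<mZ}", simplified])
  finally have cY: "card Y \<le> n * mZ" .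
  have lpos: "log 2 (real n) > 0" using n by simp
  have "BC n mZ HZ f \<subseteq> vsum2 ` {S. S \<subseteq> Y \<and> card S \<le> K}"
  proof
    fix w assume "w \<in> BC n mZ HZ f"
    then obtain k where k: "yweight n mZ HZ w = enat k" "real k \<le> f * real n / log 2 (real n)"
      unfolding BC_def by auto
    obtain S where S: "S \<subseteq> Y" "w = vsum2 S" "card S = k" using yweight_witness[OF k(1)] Y_def by auto
    have "k \<le> K" unfolding K_def using k(2)
      by (metis le_nat_floor of_nat_floor of_nat_le_iff floor_of_nat le_floor_iff nat_int of_int_of_nat_eq)
    then show "w \<in> vsum2 ` {S. S \<subseteq> Y \<and> card S \<le> K}" using S by auto
  qed
  then have "card (BC n mZ HZ f) \<le> card (vsum2 ` {S. S \<subseteq> Y \<and> card S \<le> K})"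
    by (rule card_mono[rotated]) (use finY in auto)
  also have "\<dots> \<le> card {S. S \<subseteq> Y \<and> card S \<le> K}" by (rule card_image_le) (use finY in auto)
  also have "\<dots> \<le> (card Y + 1) ^ K" by (rule card_small_subsets[OF finY])
  also have "\<dots> \<le> (n * n) ^ K"
  proof (rule power_mono)
    have "n * mZ + 1 \<le> n * n"
    proof -
      have "n * mZ \<le> n * (n - 1)" using mZ by simp
      moreover have "n * (n - 1) = n * n - n" by (simp add: diff_mult_distrib2)
      ultimately show ?thesis using n le_square[of n] by linarith
    qed
    then show "card Y + 1 \<le> n * n" using cY by simp
  qed simp
  finally have c1: "real (card (BC n mZ HZ f)) \<le> real n ^ (2 * K)"
    by (metis of_nat_le_iff of_nat_power power_mult power2_eq_square)
  have "real n ^ (2 * K) = 2 powr (log 2 (real n) * real (2 * K))"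
  proof -
    have "real n = 2 powr (log 2 (real n))" using n by simp
    then have "real n ^ (2 * K) = (2 powr (log 2 (real n))) ^ (2 * K)" by simp
    also have "\<dots> = 2 powr (log 2 (real n) * real (2 * K))"
      by (simp add: powr_realpow[symmetric] powr_powr)
    finally show ?thesis .
  qed
  also have "\<dots> \<le> 2 powr (2 * f * real n)"
  proof -
    have "real K \<le> f * real n / log 2 (real n)" unfolding K_def
      using f n by (simp add: of_nat_floor)
    then have "log 2 (real n) * real K \<le> f * real n" using lpos by (simp add: field_simps)
    then show ?thesis by simp
  qed
  finally show ?thesis using c1 by linarith
qed


lemma finite_mats: "finite (mats m n)" and ne_mats: "mats m n \<noteq> {}"
proof -
  have "card (mats m n) = card (vecs n) ^ m" unfolding mats_eq by (rule card_funs[OF finite_vecs])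
  moreover have "(\<lambda>_. False) \<in> vecs n" unfolding vecs_def by simp
  ultimately have "card (mats m n) > 0" using finite_vecs card_gt_0_iff by (metis empty_iff zero_less_power)
  then show "finite (mats m n)" "mats m n \<noteq> {}" using card_gt_0_iff by blast+
qed

theorem lemma18:
  fixes \<rho>X \<rho>Z f :: real
  assumes "0 < \<rho>X" "\<rho>X < 1/2" "0 < \<rho>Z" "\<rho>Z < 1/2" "0 < f" "f < 1"
  shows "\<exists>N. \<forall>n mX mZ. N \<le> n \<longrightarrow> real mX = \<rho>X * real n \<longrightarrow> real mZ = \<rho>Z * real n \<longrightarrow>
           measure_pmf.prob (CSS n mX mZ)
             {(HX, HZ). BC n mZ HZ f \<inter> LZ n mX mZ HX HZ \<noteq> {}}
           \<le> 2 powr (- (real n * (\<rho>X - 6 * f)))"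
proof (intro exI allI impI)
  fix n mX mZ :: nat
  assume n: "2 \<le> n" and hX: "real mX = \<rho>X * real n" and hZ: "real mZ = \<rho>Z * real n"
  have mZ: "mZ < n"
  proof -
    have "\<rho>Z * real n < real n" using n assms(4) by simp
    then show ?thesis using hZ by simp
  qed
  define c where "c = 2 powr (2 * f * real n) / 2 ^ mX"
  define E where "E = {(HX, HZ). BC n mZ HZ f \<inter> LZ n mX mZ HX HZ \<noteq> {}}"
  have c0: "0 \<le> c" unfolding c_def by simp
  have inner: "emeasure (measure_pmf (bind_pmf (pmf_of_set {HX \<in> mats mX n. orth2 n mX mZ HX HZ})
          (\<lambda>HX. return_pmf (HX, HZ)))) E \<le> ennreal c" if HZ: "HZ \<in> mats mZ n" for HZ
  proof -
    have "bind_pmf (pmf_of_set {HX \<in> mats mX n. orth2 n mX mZ HX HZ}) (\<lambda>HX. return_pmf (HX, HZ))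
          = map_pmf (\<lambda>HX. (HX, HZ)) (pmf_of_set {HX \<in> mats mX n. orth2 n mX mZ HX HZ})"
      by (simp add: map_pmf_def)
    moreover have "measure (map_pmf (\<lambda>HX. (HX, HZ)) (pmf_of_set {HX \<in> mats mX n. orth2 n mX mZ HX HZ})) E
        = measure (pmf_of_set {HX \<in> mats mX n. orth2 n mX mZ HX HZ}) {HX. BC n mZ HZ f \<inter> LZ n mX mZ HX HZ \<noteq> {}}"
      unfolding E_def by (simp add: vimage_def)
    moreover have "\<dots> \<le> c"
    proof -
      have "measure (pmf_of_set {HX \<in> mats mX n. orth2 n mX mZ HX HZ}) {HX. BC n mZ HZ f \<inter> LZ n mX mZ HX HZ \<noteq> {}}
          \<le> real (card (BC n mZ HZ f)) / 2 ^ mX" by (rule fixed_bound[OF HZ])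
      also have "\<dots> \<le> c" unfolding c_def
        by (rule divide_right_mono) (use card_BC[OF n mZ assms(5)] in auto)
      finally show ?thesis .
    qed
    ultimately show ?thesis by (simp add: measure_pmf.emeasure_eq_measure ennreal_leI)
  qed
  have "emeasure (measure_pmf (CSS n mX mZ)) E \<le> ennreal c"
    unfolding CSS_def emeasure_bind_pmf
    by (rule measure_pmf.nn_integral_le_const) (use c0 inner finite_mats ne_mats in \<open>auto intro!: AE_pmfI\<close>)
  then have P: "measure_pmf.prob (CSS n mX mZ) E \<le> c"
    using c0 by (simp add: measure_pmf.emeasure_eq_measure)
  have "c = 2 powr (2 * f * real n - \<rho>X * real n)"
    unfolding c_def using hX by (simp add: powr_diff powr_realpow[symmetric])
  also have "\<dots> \<le> 2 powr (- (real n * (\<rho>X - 6 * f)))"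
    using assms(5) n by (intro powr_mono) (auto simp: algebra_simps)
  finally show "measure_pmf.prob (CSS n mX mZ) {(HX, HZ). BC n mZ HZ f \<inter> LZ n mX mZ HX HZ \<noteq> {}}
           \<le> 2 powr (- (real n * (\<rho>X - 6 * f)))" using P unfolding E_def by simp
qed

end
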